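(* Let $K$ be a Markov kernel on a finite set $\mathcal{X}$, reversible with respect to a probability measure $\pi$, and assume that for all $f:\mathcal{X}\to\mathbb{R}$ \[ \mathrm{Ent}_\pi(f^2)\le2\sigma^2\int\sum_{y\in\mathcal{X}}(f(x)-f(y))^2K(x,y)\,d\pi(x). \] Then for every $f:\mathcal{X}\to\mathbb{R}$ and every $p\ge2$, \[ \mathrm{Ent}_\pi(|f|^p)\le\sigma^2p^2\int|f|^{p-2}|\partial f|^2d\pi, \qquad \mathrm{Ent}_\pi(|f|^p)\le\sigma^2p^2\|f\|_p^{p-2}\|\partial f\|_p^2, \] where $|\partial f|(x)=\big(\sum_{y\in\mathcal{X}}(f(x)-f(y))^2K(x,y)\big)^{1/2}$.
   Context: $\mathrm{Ent}_\pi(g)=\mathbb{E}_\pi g\log g-\mathbb{E}_\pi g\log\mathbb{E}_\pi g$ for $g\ge0$; $\|g\|_p=(\mathbb{E}_\pi|g|^p)^{1/p}$ and $\|\partial f\|_p=\||\partial f|\|_p$. *)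

theory Defs
  imports "HOL-Analysis.Analysis"
begin

text \<open>Power of a nonnegative real with the convention t^0 = 1 (also for t = 0),
  which Isabelle's powr does not follow (0 powr 0 = 0).\<close>
definition rpow :: "real \<Rightarrow> real \<Rightarrow> real" where
  "rpow t a = (if a = 0 then 1 else t powr a)"

definition expect :: "('a::finite \<Rightarrow> real) \<Rightarrow> ('a \<Rightarrow> real) \<Rightarrow> real" where
  "expect \<pi> g = (\<Sum>x\<in>UNIV. \<pi> x * g x)"

definition Ent :: "('a::finite \<Rightarrow> real) \<Rightarrow> ('a \<Rightarrow> real) \<Rightarrow> real" where
  "Ent \<pi> g = expect \<pi> (\<lambda>x. g x * ln (g x)) - expect \<pi> g * ln (expect \<pi> g)"

definition Lpnorm :: "('a::finite \<Rightarrow> real) \<Rightarrow> real \<Rightarrow> ('a \<Rightarrow> real) \<Rightarrow> real" where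
  "Lpnorm \<pi> p g = (expect \<pi> (\<lambda>x. \<bar>g x\<bar> powr p)) powr (1 / p)"

definition grad :: "('a::finite \<Rightarrow> 'a \<Rightarrow> real) \<Rightarrow> ('a \<Rightarrow> real) \<Rightarrow> 'a \<Rightarrow> real" where
  "grad K f x = sqrt (\<Sum>y\<in>UNIV. (f x - f y)^2 * K x y)"

definition markov_kernel :: "('a::finite \<Rightarrow> 'a \<Rightarrow> real) \<Rightarrow> bool" where
  "markov_kernel K \<longleftrightarrow> (\<forall>x y. K x y \<ge> 0) \<and> (\<forall>x. (\<Sum>y\<in>UNIV. K x y) = 1)"

definition prob_vector :: "('a::finite \<Rightarrow> real) \<Rightarrow> bool" where
  "prob_vector \<pi> \<longleftrightarrow> (\<forall>x. \<pi> x \<ge> 0) \<and> (\<Sum>x\<in>UNIV. \<pi> x) = 1"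

definition reversible :: "('a::finite \<Rightarrow> 'a \<Rightarrow> real) \<Rightarrow> ('a \<Rightarrow> real) \<Rightarrow> bool" where
  "reversible K \<pi> \<longleftrightarrow> (\<forall>x y. \<pi> x * K x y = \<pi> y * K y x)"

end

theory Submission
  imports Defs
begin
lemma tang:
  fixes a b q :: real
  assumes "0 \<le> b" "b \<le> a" "q \<ge> 1"
  shows "a powr q - b powr q \<le> q * rpow a (q - 1) * (a - b)"
proof (cases "a = 0")
  case True then show ?thesis using assms by auto
next
  case False
  hence a: "a > 0" using assms by auto
  show ?thesis
  proof (cases "b = 0")
    case True
    have "a powr q \<le> q * a powr q" using assms a by (simp add: mult_le_cancel_right1)
    also have "q * a powr q = q * rpow a (q - 1) * (a - b)"
      using a True by (auto simp: rpow_def powr_diff)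
    finally show ?thesis using True by simp
  next
    case False
    hence b: "b > 0" using assms by auto
    have "b powr q - a powr q \<ge> (q * a powr (q - 1)) * (b - a)"
      apply (rule convex_on_imp_above_tangent[OF powr_convex[OF assms(3)]])
      using a b by (auto intro!: has_field_derivative_at_within has_real_derivative_powr simp: interior_open)
    then show ?thesis using a b by (cases "q = 1") (auto simp: rpow_def algebra_simps)
  qed
qed

lemma keysc:
  fixes a b q :: real
  assumes "0 \<le> a" "0 \<le> b" "q \<ge> 1"
  shows "(a powr q - b powr q)^2 \<le> q^2 * (rpow a (2*q-2) + rpow b (2*q-2)) * (a - b)^2"
proof -
  have sq: "(rpow t (q-1))^2 = rpow t (2*q-2)" if "t \<ge> 0" for t
    using that by (auto simp: rpow_def power2_eq_square powr_add[symmetric])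
  have nn: "rpow t s \<ge> 0" for t s by (auto simp: rpow_def)
  have main: "(a powr q - b powr q)^2 \<le> q^2 * rpow a (2*q-2) * (a - b)^2"
    if "0 \<le> b" "b \<le> a" for a b
  proof -
    have "0 \<le> a powr q - b powr q" using that assms(3) by (simp add: powr_mono2)
    hence "(a powr q - b powr q)^2 \<le> (q * rpow a (q - 1) * (a - b))^2"
      using tang[OF that assms(3)] by (simp add: power_mono)
    also have "\<dots> = q^2 * rpow a (2*q-2) * (a - b)^2"
      using sq[of a] that by (simp add: power_mult_distrib)
    finally show ?thesis .
  qed
  show ?thesis
  proof (cases "b \<le> a")
    case True
    have "q^2 * rpow a (2*q-2) * (a - b)^2 \<le> q^2 * (rpow a (2*q-2) + rpow b (2*q-2)) * (a - b)^2"
      using nn[of b "2*q-2"] by (intro mult_right_mono mult_left_mono) auto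
    then show ?thesis using main[OF assms(2) True] by linarith
  next
    case False
    have "q^2 * rpow b (2*q-2) * (a - b)^2 \<le> q^2 * (rpow a (2*q-2) + rpow b (2*q-2)) * (a - b)^2"
      using nn[of a "2*q-2"] by (intro mult_right_mono mult_left_mono) auto
    then show ?thesis using main[OF assms(1), of b] False by (simp add: power2_commute)
  qed
qed

lemma holder_fin:
  fixes \<pi> u v :: "'a::finite \<Rightarrow> real" and \<alpha> \<beta> :: real
  assumes pi: "\<And>x. \<pi> x \<ge> 0" and u: "\<And>x. u x \<ge> 0" and v: "\<And>x. v x \<ge> 0"
    and ab: "0 < \<alpha>" "0 < \<beta>" "\<alpha> + \<beta> = 1"
  shows "(\<Sum>x\<in>UNIV. \<pi> x * (u x powr \<alpha> * v x powr \<beta>))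
         \<le> (\<Sum>x\<in>UNIV. \<pi> x * u x) powr \<alpha> * (\<Sum>x\<in>UNIV. \<pi> x * v x) powr \<beta>"
proof -
  define A where "A = (\<Sum>x\<in>UNIV. \<pi> x * u x)"
  define B where "B = (\<Sum>x\<in>UNIV. \<pi> x * v x)"
  have A0: "A \<ge> 0" unfolding A_def using pi u by (simp add: sum_nonneg)
  have B0: "B \<ge> 0" unfolding B_def using pi v by (simp add: sum_nonneg)
  show ?thesis
  proof (cases "A = 0 \<or> B = 0")
    case True
    have z: "\<pi> x * (u x powr \<alpha> * v x powr \<beta>) = 0" for x
    proof -
      from True have "\<pi> x * u x = 0 \<or> \<pi> x * v x = 0"
        unfolding A_def B_def using pi u v
        by (subst (asm) (1 2) sum_nonneg_eq_0_iff) auto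
      then show ?thesis by auto
    qed
    have "(\<Sum>x\<in>UNIV. \<pi> x * (u x powr \<alpha> * v x powr \<beta>)) = 0" by (simp only: z sum.neutral_const)
    then show ?thesis by simp
  next
    case False
    hence Ap: "A > 0" and Bp: "B > 0" using A0 B0 by auto
    have trm: "\<pi> x * (u x powr \<alpha> * v x powr \<beta>)
        \<le> A powr \<alpha> * B powr \<beta> * (\<alpha> * (\<pi> x * u x) / A + \<beta> * (\<pi> x * v x) / B)" for x
    proof (cases "u x = 0 \<or> v x = 0")
      case True
      then show ?thesis using pi[of x] u[of x] v[of x] Ap Bp ab
        by (auto intro!: mult_nonneg_nonneg add_nonneg_nonneg divide_nonneg_pos)
    next
      case False
      hence up: "u x > 0" and vp: "v x > 0" using u[of x] v[of x] by auto
      have Y: "(u x / A) powr \<alpha> * (v x / B) powr \<beta> \<le> \<alpha> * (u x / A) + \<beta> * (v x / B)"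
        using Youngs_inequality_0[OF less_imp_le[OF ab(1)] less_imp_le[OF ab(2)] ab(3), of "u x / A" "v x / B"] up vp Ap Bp by simp
      have "(u x / A) powr \<alpha> * (v x / B) powr \<beta> = (u x powr \<alpha> * v x powr \<beta>) / (A powr \<alpha> * B powr \<beta>)"
        using up vp Ap Bp by (simp add: powr_divide)
      with Y have "u x powr \<alpha> * v x powr \<beta> \<le> A powr \<alpha> * B powr \<beta> * (\<alpha> * (u x / A) + \<beta> * (v x / B))"
        using Ap Bp by (simp add: divide_le_eq mult.commute)
      from mult_left_mono[OF this pi[of x]] show ?thesis by (simp add: algebra_simps)
    qed
    have "(\<Sum>x\<in>UNIV. \<pi> x * (u x powr \<alpha> * v x powr \<beta>))
       \<le> (\<Sum>x\<in>UNIV. A powr \<alpha> * B powr \<beta> * (\<alpha> * (\<pi> x * u x) / A + \<beta> * (\<pi> x * v x) / B))"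
      by (rule sum_mono) (rule trm)
    also have "\<dots> = A powr \<alpha> * B powr \<beta> * (\<alpha> * A / A + \<beta> * B / B)"
      by (simp add: sum_distrib_left[symmetric] sum.distrib sum_divide_distrib[symmetric] A_def B_def)
    also have "\<dots> = A powr \<alpha> * B powr \<beta>" using Ap Bp ab by simp
    finally show ?thesis by (simp add: A_def B_def)
  qed
qed


lemma dirichlet_cmp:
  fixes K :: "'a::finite \<Rightarrow> 'a \<Rightarrow> real" and \<pi> f :: "'a \<Rightarrow> real" and p :: real
  assumes "markov_kernel K" "prob_vector \<pi>" "reversible K \<pi>" "p \<ge> 2"
  shows "2 * expect \<pi> (\<lambda>x. \<Sum>y\<in>UNIV. (\<bar>f x\<bar> powr (p/2) - \<bar>f y\<bar> powr (p/2))^2 * K x y)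
     \<le> p^2 * expect \<pi> (\<lambda>x. rpow \<bar>f x\<bar> (p - 2) * (grad K f x)^2)"
proof -
  define r where "r x = rpow \<bar>f x\<bar> (p - 2)" for x
  define d where "d x y = \<pi> x * K x y * (f x - f y)^2" for x y
  have Kn: "K x y \<ge> 0" for x y using assms(1) by (auto simp: markov_kernel_def)
  have pin: "\<pi> x \<ge> 0" for x using assms(2) by (auto simp: prob_vector_def)
  have rn: "r x \<ge> 0" for x by (auto simp: r_def rpow_def)
  have dsym: "d y x = d x y" for x y
    using assms(3) unfolding d_def reversible_def by (simp add: power2_commute)
  have pt: "\<pi> x * ((\<bar>f x\<bar> powr (p/2) - \<bar>f y\<bar> powr (p/2))^2 * K x y)
      \<le> (p/2)^2 * (r x * d x y + r y * d x y)" for x y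
  proof -
    have "(\<bar>f x\<bar> powr (p/2) - \<bar>f y\<bar> powr (p/2))^2
       \<le> (p/2)^2 * (rpow \<bar>f x\<bar> (2*(p/2)-2) + rpow \<bar>f y\<bar> (2*(p/2)-2)) * (\<bar>f x\<bar> - \<bar>f y\<bar>)^2"
      using assms(4) by (intro keysc) auto
    also have "\<dots> \<le> (p/2)^2 * (r x + r y) * (f x - f y)^2"
    proof -
      have "(\<bar>f x\<bar> - \<bar>f y\<bar>)^2 \<le> (f x - f y)^2"
        by (metis abs_triangle_ineq3 abs_ge_zero power2_abs power_mono)
      moreover have "2*(p/2)-2 = p - 2" by simp
      ultimately show ?thesis using rn[of x] rn[of y] unfolding r_def
        by (simp only:) (intro mult_left_mono, auto)
    qed
    finally have "(\<bar>f x\<bar> powr (p/2) - \<bar>f y\<bar> powr (p/2))^2 \<le> (p/2)^2 * (r x + r y) * (f x - f y)^2" .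
    from mult_left_mono[OF this, of "\<pi> x * K x y"] pin[of x] Kn[of x y]
    show ?thesis unfolding d_def by (simp add: algebra_simps)
  qed
  have "2 * expect \<pi> (\<lambda>x. \<Sum>y\<in>UNIV. (\<bar>f x\<bar> powr (p/2) - \<bar>f y\<bar> powr (p/2))^2 * K x y)
      = 2 * (\<Sum>x\<in>UNIV. \<Sum>y\<in>UNIV. \<pi> x * ((\<bar>f x\<bar> powr (p/2) - \<bar>f y\<bar> powr (p/2))^2 * K x y))"
    by (simp add: expect_def sum_distrib_left)
  also have "\<dots> \<le> 2 * (\<Sum>x\<in>UNIV. \<Sum>y\<in>UNIV. (p/2)^2 * (r x * d x y + r y * d x y))"
    by (intro mult_left_mono sum_mono pt) auto
  also have "\<dots> = p^2/2 * ((\<Sum>x\<in>UNIV. \<Sum>y\<in>UNIV. r x * d x y) + (\<Sum>x\<in>UNIV. \<Sum>y\<in>UNIV. r y * d x y))"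
    by (simp only: sum_distrib_left[symmetric] sum.distrib distrib_left) (simp add: power_divide)
  also have "(\<Sum>x\<in>UNIV. \<Sum>y\<in>UNIV. r y * d x y) = (\<Sum>x\<in>UNIV. \<Sum>y\<in>UNIV. r x * d x y)"
    by (subst sum.swap) (simp add: dsym)
  also have "p^2/2 * ((\<Sum>x\<in>UNIV. \<Sum>y\<in>UNIV. r x * d x y) + (\<Sum>x\<in>UNIV. \<Sum>y\<in>UNIV. r x * d x y))
       = p^2 * (\<Sum>x\<in>UNIV. \<Sum>y\<in>UNIV. r x * d x y)" by simp
  also have "(\<Sum>x\<in>UNIV. \<Sum>y\<in>UNIV. r x * d x y) = expect \<pi> (\<lambda>x. rpow \<bar>f x\<bar> (p - 2) * (grad K f x)^2)"
  proof -
    have "(grad K f x)^2 = (\<Sum>y\<in>UNIV. (f x - f y)^2 * K x y)" for x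
      unfolding grad_def using Kn by (intro real_sqrt_pow2 sum_nonneg) auto
    then show ?thesis
      by (simp add: expect_def r_def d_def sum_distrib_left algebra_simps)
  qed
  finally show ?thesis .
qed

theorem lemma3p2:
  fixes K :: "'a::finite \<Rightarrow> 'a \<Rightarrow> real" and \<pi> :: "'a \<Rightarrow> real" and \<sigma> :: real
  assumes "markov_kernel K" and "prob_vector \<pi>" and "reversible K \<pi>"
    and LSI: "\<And>f :: 'a \<Rightarrow> real. Ent \<pi> (\<lambda>x. (f x)^2)
               \<le> 2 * \<sigma>^2 * expect \<pi> (\<lambda>x. \<Sum>y\<in>UNIV. (f x - f y)^2 * K x y)"
  shows "\<forall>(f :: 'a \<Rightarrow> real) (p :: real). p \<ge> 2 \<longrightarrow>
           Ent \<pi> (\<lambda>x. \<bar>f x\<bar> powr p)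
             \<le> \<sigma>^2 * p^2 * expect \<pi> (\<lambda>x. rpow \<bar>f x\<bar> (p - 2) * (grad K f x)^2)
         \<and> Ent \<pi> (\<lambda>x. \<bar>f x\<bar> powr p)
             \<le> \<sigma>^2 * p^2 * rpow (Lpnorm \<pi> p f) (p - 2) * (Lpnorm \<pi> p (grad K f))^2"
proof (intro allI impI conjI)
  fix f :: "'a \<Rightarrow> real" and p :: real
  assume p2: "p \<ge> 2"
  have pin: "\<pi> x \<ge> 0" for x using assms(2) by (auto simp: prob_vector_def)
  define E where "E = expect \<pi> (\<lambda>x. rpow \<bar>f x\<bar> (p - 2) * (grad K f x)^2)"
  have sq: "(\<bar>f x\<bar> powr (p/2))^2 = \<bar>f x\<bar> powr p" for x
    by (simp add: power2_eq_square powr_add[symmetric])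
  have "Ent \<pi> (\<lambda>x. \<bar>f x\<bar> powr p) = Ent \<pi> (\<lambda>x. (\<bar>f x\<bar> powr (p/2))^2)"
    by (simp only: sq)
  also have "\<dots> \<le> 2 * \<sigma>^2 * expect \<pi> (\<lambda>x. \<Sum>y\<in>UNIV. (\<bar>f x\<bar> powr (p/2) - \<bar>f y\<bar> powr (p/2))^2 * K x y)"
    by (rule LSI)
  also have "\<dots> = \<sigma>^2 * (2 * expect \<pi> (\<lambda>x. \<Sum>y\<in>UNIV. (\<bar>f x\<bar> powr (p/2) - \<bar>f y\<bar> powr (p/2))^2 * K x y))"
    by simp
  also have "\<dots> \<le> \<sigma>^2 * (p^2 * E)"
    unfolding E_def by (intro mult_left_mono dirichlet_cmp[OF assms(1-3) p2]) auto
  finally have E1: "Ent \<pi> (\<lambda>x. \<bar>f x\<bar> powr p) \<le> \<sigma>^2 * p^2 * E" by simp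
  then show "Ent \<pi> (\<lambda>x. \<bar>f x\<bar> powr p)
             \<le> \<sigma>^2 * p^2 * expect \<pi> (\<lambda>x. rpow \<bar>f x\<bar> (p - 2) * (grad K f x)^2)"
    by (simp add: E_def)
  have Kn: "K x y \<ge> 0" for x y using assms(1) by (auto simp: markov_kernel_def)
  have gn: "grad K f x \<ge> 0" for x unfolding grad_def using Kn by (intro real_sqrt_ge_zero sum_nonneg) auto
  have H: "E \<le> rpow (Lpnorm \<pi> p f) (p - 2) * (Lpnorm \<pi> p (grad K f))^2"
  proof (cases "p = 2")
    case True
    have B0: "expect \<pi> (\<lambda>x. \<bar>grad K f x\<bar> powr 2) \<ge> 0"
      unfolding expect_def using pin by (intro sum_nonneg) auto
    have "(Lpnorm \<pi> p (grad K f))^2 = expect \<pi> (\<lambda>x. \<bar>grad K f x\<bar> powr 2)"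
      unfolding Lpnorm_def True using B0 by (simp add: powr_half_sqrt)
    also have "\<dots> = expect \<pi> (\<lambda>x. (grad K f x)^2)"
      using gn by (simp add: expect_def)
    finally show ?thesis unfolding E_def True by (simp add: rpow_def)
  next
    case False
    hence pg: "p > 2" using p2 by auto
    define A where "A = expect \<pi> (\<lambda>x. \<bar>f x\<bar> powr p)"
    define B where "B = expect \<pi> (\<lambda>x. \<bar>grad K f x\<bar> powr p)"
    have h: "(\<Sum>x\<in>UNIV. \<pi> x * ((\<bar>f x\<bar> powr p) powr ((p-2)/p) * (\<bar>grad K f x\<bar> powr p) powr (2/p)))
         \<le> (\<Sum>x\<in>UNIV. \<pi> x * \<bar>f x\<bar> powr p) powr ((p-2)/p) * (\<Sum>x\<in>UNIV. \<pi> x * \<bar>grad K f x\<bar> powr p) powr (2/p)"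
      using pg by (intro holder_fin pin) (auto simp: field_simps)
    have e1: "(\<bar>f x\<bar> powr p) powr ((p-2)/p) = rpow \<bar>f x\<bar> (p - 2)" for x
      using pg by (simp add: powr_powr rpow_def)
    have e2: "(\<bar>grad K f x\<bar> powr p) powr (2/p) = (grad K f x)^2" for x
      using pg gn[of x] by (simp add: powr_powr)
    have "E \<le> A powr ((p-2)/p) * B powr (2/p)"
      using h unfolding E_def A_def B_def expect_def e1 e2 .
    also have "A powr ((p-2)/p) = rpow (Lpnorm \<pi> p f) (p - 2)"
      using pg by (simp add: Lpnorm_def A_def rpow_def powr_powr)
    also have "B powr (2/p) = (Lpnorm \<pi> p (grad K f))^2"
      using pg by (simp add: Lpnorm_def B_def power2_eq_square powr_add[symmetric])
    finally show ?thesis by simp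
  qed
  have "\<sigma>^2 * p^2 * E \<le> \<sigma>^2 * p^2 * (rpow (Lpnorm \<pi> p f) (p - 2) * (Lpnorm \<pi> p (grad K f))^2)"
    by (intro mult_left_mono H) auto
  with E1 show "Ent \<pi> (\<lambda>x. \<bar>f x\<bar> powr p)
             \<le> \<sigma>^2 * p^2 * rpow (Lpnorm \<pi> p f) (p - 2) * (Lpnorm \<pi> p (grad K f))^2"
    by (simp add: mult.assoc)
qed

end
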